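(* Let $f$ be a probability density on $\mathbb{R}$ with $f\in\mathbb{L}_2$ and $f(x)=f(-x)$ for all $x\in\mathbb{R}$. Let $\Theta$ be a compact subset of $(0,1/2)\times(\mathbb{R}^2\setminus\Delta)$, where $\Delta=\{(x,x):x\in\mathbb{R}\}$, and let $\theta_0=(p_0,\alpha_0,\beta_0)\in\Theta$. Let $g(x)=p_0f(x-\alpha_0)+(1-p_0)f(x-\beta_0)$, $x\in\mathbb{R}$. For $\theta=(p,\alpha,\beta)\in\Theta$ and $u\in\mathbb{R}$ put $M(\theta,u)=pe^{iu\alpha}+(1-p)e^{iu\beta}$. Then, for $\theta\in\Theta$, we have $\mathrm{Im}\left(g^*(u)/M(\theta,u)\right)=0$ for all $u\in\mathbb{R}$ if and only if $\theta=\theta_0$.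
   Context: For an integrable function $f$, $f^*(u)=\int_{\mathbb{R}}e^{ixu}f(x)\,dx$ denotes its Fourier transform. Since $p<1/2$ on $\Theta$, $M(\theta,u)\neq 0$ for all $u$. *)

theory Defs
  imports "HOL-Analysis.Analysis"
begin

definition fourier_tr :: "(real \<Rightarrow> real) \<Rightarrow> real \<Rightarrow> complex" where
  "fourier_tr f u = (LINT x|lborel. exp (\<i> * complex_of_real (x * u)) * complex_of_real (f x))"

definition prob_density :: "(real \<Rightarrow> real) \<Rightarrow> bool" where
  "prob_density f \<longleftrightarrow> f \<in> borel_measurable lborel \<and> (\<forall>x. 0 \<le> f x)
     \<and> integrable lborel f \<and> (LINT x|lborel. f x) = 1"

definition square_integrable :: "(real \<Rightarrow> real) \<Rightarrow> bool" where
  "square_integrable f \<longleftrightarrow> f \<in> borel_measurable lborel \<and> integrable lborel (\<lambda>x. (f x)\<^sup>2)"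

definition mix_M :: "real \<times> real \<times> real \<Rightarrow> real \<Rightarrow> complex" where
  "mix_M \<theta> u = (case \<theta> of (p, \<alpha>, \<beta>) \<Rightarrow>
      complex_of_real p * exp (\<i> * complex_of_real (u * \<alpha>))
      + complex_of_real (1 - p) * exp (\<i> * complex_of_real (u * \<beta>)))"

end

theory Submission imports Defs "HOL-Complex_Analysis.Complex_Analysis" "HOL-Real_Asymp.Real_Asymp" begin

lemma e1: "exp(\<i> * complex_of_real x) * cnj (exp (\<i> * complex_of_real y)) = exp (\<i> * complex_of_real (x - y))"
  by (simp add: exp_cnj exp_diff exp_minus field_simps)

lemma lim1: assumes "e \<le> (R::real)"
  shows "((\<lambda>y. exp(e*y)*exp(-(R*y))) \<longlongrightarrow> (if e = R then 1 else 0)) at_top"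
proof (cases "e = R")
  case True then show ?thesis by (simp add: exp_minus field_simps)
next
  case False
  then have "e - R < 0" using assms by simp
  then have "((\<lambda>y. exp((e-R)*y)) \<longlongrightarrow> 0) at_top" by real_asymp
  moreover have "\<And>y. exp(e*y)*exp(-(R*y)) = exp((e-R)*y)" by (simp add: exp_add[symmetric] algebra_simps)
  ultimately show ?thesis using False by simp
qed

lemma core:
  fixes q q0 h h0 l l0 \<epsilon> :: real
  assumes hl: "l < h" "l0 < h0" and q: "0<q" "q<1" "0<q0" "q0<1" "q \<noteq> 1/2" and ep: "\<epsilon> > 0"
    and Z: "\<And>u. \<bar>u\<bar> < \<epsilon> \<Longrightarrow> Im (mix_M (q0,h0,l0) u * cnj (mix_M (q,h,l) u)) = 0"
  shows "q = q0 \<and> h = h0 \<and> l = l0"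
proof -
  define c1 where "c1 = q0*q"
  define c2 where "c2 = q0*(1-q)"
  define c3 where "c3 = (1-q0)*q"
  define c4 where "c4 = (1-q0)*(1-q)"
  define d1 where "d1 = h0-h"
  define d2 where "d2 = h0-l"
  define d3 where "d3 = l0-h"
  define d4 where "d4 = l0-l"
  define T where "T = (\<lambda>c d (z::complex). complex_of_real c * (exp(\<i>*complex_of_real d*z) - exp(-(\<i>*complex_of_real d*z))))"
  define G where "G = (\<lambda>z. T c1 d1 z + T c2 d2 z + T c3 d3 z + T c4 d4 z)"
  have GR: "G (complex_of_real u) = mix_M (q0,h0,l0) u * cnj (mix_M (q,h,l) u) - cnj (mix_M (q0,h0,l0) u * cnj (mix_M (q,h,l) u))" for u
  proof -
    let ?e = "\<lambda>x. exp(\<i>*complex_of_real x)"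
    have A0: "mix_M (q0,h0,l0) u * cnj (mix_M (q,h,l) u) = 
       complex_of_real c1 * (?e (u*h0) * cnj (?e (u*h))) + complex_of_real c2 * (?e (u*h0) * cnj (?e (u*l)))
     + complex_of_real c3 * (?e (u*l0) * cnj (?e (u*h))) + complex_of_real c4 * (?e (u*l0) * cnj (?e (u*l)))"
      unfolding mix_M_def c1_def c2_def c3_def c4_def
      by (simp add: algebra_simps)
    have A: "mix_M (q0,h0,l0) u * cnj (mix_M (q,h,l) u) = 
       complex_of_real c1 * exp(\<i>*complex_of_real (d1*u)) + complex_of_real c2 * exp(\<i>*complex_of_real (d2*u))
     + complex_of_real c3 * exp(\<i>*complex_of_real (d3*u)) + complex_of_real c4 * exp(\<i>*complex_of_real (d4*u))"
      unfolding A0 e1 d1_def d2_def d3_def d4_def by (simp add: algebra_simps)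
    show ?thesis unfolding A G_def T_def by (simp add: exp_cnj algebra_simps)
  qed
  have hol: "G holomorphic_on UNIV" unfolding G_def T_def by (intro holomorphic_intros)
  have lp: "0 islimpt (complex_of_real ` {-\<epsilon><..<\<epsilon>})"
    unfolding islimpt_approachable
  proof (intro allI impI)
    fix e :: real assume "e > 0"
    show "\<exists>x'\<in>complex_of_real ` {-\<epsilon><..<\<epsilon>}. x' \<noteq> 0 \<and> dist x' 0 < e"
    proof (rule bexI[of _ "complex_of_real (min e \<epsilon> / 2)"])
      show "complex_of_real (min e \<epsilon> / 2) \<in> complex_of_real ` {-\<epsilon><..<\<epsilon>}"
        by (rule imageI) (use \<open>e>0\<close> ep in auto)
    qed (use \<open>e>0\<close> ep in auto)
  qed
  have G0: "G z = 0" for z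
  proof (rule analytic_continuation[OF hol open_UNIV connected_UNIV subset_UNIV _ lp])
    fix w assume "w \<in> complex_of_real ` {-\<epsilon><..<\<epsilon>}"
    then obtain u where u: "w = complex_of_real u" "\<bar>u\<bar> < \<epsilon>" by auto
    show "G w = 0" unfolding u GR complex_diff_cnj using Z[OF u(2)] by simp
  qed auto
  define E where "E = (\<lambda>y. c1*(exp(d1*y) - exp(-(d1*y))) + c2*(exp(d2*y) - exp(-(d2*y)))
      + c3*(exp(d3*y) - exp(-(d3*y))) + c4*(exp(d4*y) - exp(-(d4*y))))"
  have E0: "E y = 0" for y
  proof -
    have "G (-(\<i> * complex_of_real y)) = complex_of_real (E y)"
      unfolding G_def T_def E_def by (simp add: exp_of_real[symmetric] algebra_simps)
    then show ?thesis using G0 by simp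
  qed
  define R where "R = max d2 (-d3)"
  have o: "d3 < d1" "d1 < d2" "d3 < d4" "d4 < d2"
    using hl unfolding d1_def d2_def d3_def d4_def by auto
  have le: "d1 \<le> R" "-d1 \<le> R" "d2 \<le> R" "-d2 \<le> R" "d3 \<le> R" "-d3 \<le> R" "d4 \<le> R" "-d4 \<le> R"
    using o unfolding R_def by auto
  have ne: "d1 \<noteq> R" "-d1 \<noteq> R" "-d2 \<noteq> R" "d3 \<noteq> R" "d4 \<noteq> R" "-d4 \<noteq> R"
    using o unfolding R_def by auto
  let ?x = "\<lambda>e y. exp(e*y)*exp(-(R*y))"
  let ?L = "\<lambda>e. if e = R then 1 else (0::real)"
  have lim: "((\<lambda>y. c1*(?x d1 y - ?x (-d1) y) + c2*(?x d2 y - ?x (-d2) y) + c3*(?x d3 y - ?x (-d3) y) + c4*(?x d4 y - ?x (-d4) y))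
     \<longlongrightarrow> c1*(?L d1 - ?L (-d1)) + c2*(?L d2 - ?L (-d2)) + c3*(?L d3 - ?L (-d3)) + c4*(?L d4 - ?L (-d4))) at_top"
    by (intro tendsto_intros lim1 le)
  have fe: "(\<lambda>y. c1*(?x d1 y - ?x (-d1) y) + c2*(?x d2 y - ?x (-d2) y) + c3*(?x d3 y - ?x (-d3) y) + c4*(?x d4 y - ?x (-d4) y)) = (\<lambda>y. E y * exp(-(R*y)))"
    unfolding E_def by (auto simp: algebra_simps)
  have Fz: "(\<lambda>y. c1*(?x d1 y - ?x (-d1) y) + c2*(?x d2 y - ?x (-d2) y) + c3*(?x d3 y - ?x (-d3) y) + c4*(?x d4 y - ?x (-d4) y)) = (\<lambda>y. 0)"
    unfolding fe E0 by simp
  from lim have "((\<lambda>y::real. 0::real) \<longlongrightarrow> c1*(?L d1 - ?L (-d1)) + c2*(?L d2 - ?L (-d2)) + c3*(?L d3 - ?L (-d3)) + c4*(?L d4 - ?L (-d4))) at_top"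
    unfolding Fz by assumption
  then have "c1*(?L d1 - ?L (-d1)) + c2*(?L d2 - ?L (-d2)) + c3*(?L d3 - ?L (-d3)) + c4*(?L d4 - ?L (-d4)) = 0"
    using tendsto_unique[OF trivial_limit_at_top_linorder] tendsto_const by blast
  then have L0: "c2 * ?L d2 - c3 * ?L (-d3) = 0" using ne by simp
  have c23: "c2 > 0" "c3 > 0" using q unfolding c2_def c3_def by auto
  have R2: "d2 = R" and R3: "-d3 = R"
    using L0 c23 unfolding R_def by (auto split: if_splits simp: max_def)
  have qq: "q = q0" using L0 R2 R3 unfolding c2_def c3_def by (simp add: algebra_simps)
  have s: "d4 = - d1" using R2 R3 unfolding d1_def d2_def d3_def d4_def by simp
  have d3e: "d3 = - d2" using R2 R3 by simp
  have "E 1 = (2*q - 1) * (exp d1 - exp (-d1))"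
    using R2 R3 unfolding E_def s d3e c1_def c2_def c3_def c4_def qq by (simp add: algebra_simps power2_eq_square)
  then have "exp d1 = exp (-d1)" using E0[of 1] q(5) by simp
  then have "d1 = 0" by simp
  then show ?thesis using qq s unfolding d1_def d4_def by simp
qed

lemma canon:
  assumes "0 < p" "p < 1/2" "a \<noteq> b"
  shows "\<exists>q h l. l < h \<and> 0 < q \<and> q < 1 \<and> q \<noteq> 1/2 \<and> mix_M (p,a,b) = mix_M (q,h,l)
     \<and> (if b < a then q = p \<and> h = a \<and> l = b else q = 1-p \<and> h = b \<and> l = a)"
proof (cases "b < a")
  case True then show ?thesis using assms by (intro exI[of _ p] exI[of _ a] exI[of _ b]) auto
next
  case False
  have "mix_M (p,a,b) = mix_M (1-p,b,a)" by (auto simp: mix_M_def fun_eq_iff)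
  then show ?thesis using assms False
    by (intro exI[of _ "1-p"] exI[of _ b] exI[of _ a]) auto
qed

lemma Mnz:
  assumes "0 < p" "p < 1/2"
  shows "mix_M (p,a,b) u \<noteq> 0"
proof
  assume "mix_M (p,a,b) u = 0"
  then have "complex_of_real p * exp (\<i> * complex_of_real (u * a)) = - (complex_of_real (1 - p) * exp (\<i> * complex_of_real (u * b)))"
    unfolding mix_M_def by (simp add: add_eq_0_iff)
  then have "norm (complex_of_real p * exp (\<i> * complex_of_real (u * a))) = norm (complex_of_real (1 - p) * exp (\<i> * complex_of_real (u * b)))"
    by (metis norm_minus_cancel)
  then have "\<bar>p\<bar> = \<bar>1 - p\<bar>" using assms by (simp add: norm_mult norm_exp_i_times del: of_real_diff)
  then show False using assms by simp
qed

lemma phi_int: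
  assumes f: "f \<in> borel_measurable lborel" "integrable lborel f"
  shows "integrable lborel (\<lambda>x. exp (\<i> * complex_of_real (x * u)) * complex_of_real (f (x::real)))"
proof (rule Bochner_Integration.integrable_bound[OF integrable_of_real[OF f(2)]])
  show "(\<lambda>x. exp (\<i> * complex_of_real (x * u)) * complex_of_real (f x)) \<in> borel_measurable lborel"
    using f(1) by measurable
  show "AE x in lborel. norm (exp (\<i> * complex_of_real (x * u)) * complex_of_real (f x)) \<le> norm (complex_of_real (f x) :: complex)"
    by (simp add: norm_mult norm_exp_i_times)
qed

lemma shift:
  assumes f: "f \<in> borel_measurable lborel" "integrable lborel f"
  shows "integrable lborel (\<lambda>x. exp (\<i> * complex_of_real (x * u)) * complex_of_real (f (x - a)))"
    and "fourier_tr (\<lambda>x. f (x - a)) u = exp (\<i> * complex_of_real (u * a)) * fourier_tr f u"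
proof -
  let ?P = "\<lambda>x. exp (\<i> * complex_of_real (x * u)) * complex_of_real (f (x::real))"
  have eq: "(\<lambda>x. exp (\<i> * complex_of_real (x * u)) * complex_of_real (f (x - a))) = (\<lambda>x. exp (\<i> * complex_of_real (u * a)) * ?P (- a + 1 * x))"
    by (auto simp: fun_eq_iff exp_add[symmetric] algebra_simps)
  show "integrable lborel (\<lambda>x. exp (\<i> * complex_of_real (x * u)) * complex_of_real (f (x - a)))"
    unfolding eq by (intro integrable_mult_right lborel_integrable_real_affine phi_int f) simp
  have "fourier_tr f u = (\<integral>x. ?P (- a + 1 * x) \<partial>lborel)"
    unfolding fourier_tr_def using lborel_integral_real_affine[of 1 ?P "-a"] by simp
  then show "fourier_tr (\<lambda>x. f (x - a)) u = exp (\<i> * complex_of_real (u * a)) * fourier_tr f u"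
    unfolding fourier_tr_def eq by simp
qed

lemma F_real:
  assumes symm: "\<forall>x. f x = f (- x)"
  shows "cnj (fourier_tr f u) = fourier_tr f u"
proof -
  let ?k = "\<lambda>x. exp (- (\<i> * complex_of_real (x * u))) * complex_of_real (f (x::real))"
  have "cnj (fourier_tr f u) = (\<integral>x. cnj (exp (\<i> * complex_of_real (x * u)) * complex_of_real (f x)) \<partial>lborel)"
    unfolding fourier_tr_def by (rule Bochner_Integration.integral_cnj[symmetric])
  also have "\<dots> = (\<integral>x. ?k x \<partial>lborel)" by (simp add: exp_cnj)
  also have "\<dots> = (\<integral>x. ?k (0 + (-1) * x) \<partial>lborel)"
    using lborel_integral_real_affine[of "-1" ?k 0] by simp
  also have "\<dots> = fourier_tr f u"
    unfolding fourier_tr_def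
  proof (intro Bochner_Integration.integral_cong refl)
    fix x :: real
    have fs: "f (- x) = f x" using symm by metis
    show "exp (- (\<i> * complex_of_real ((0 + - 1 * x) * u))) * complex_of_real (f (0 + - 1 * x)) =
      exp (\<i> * complex_of_real (x * u)) * complex_of_real (f x)" using fs by simp
  qed
  finally show ?thesis .
qed

lemma F_cont:
  assumes f: "f \<in> borel_measurable lborel" "integrable lborel f" "\<forall>x. 0 \<le> f x"
  shows "isCont (fourier_tr f) t"
  unfolding continuous_at_sequentially
proof safe
  fix X assume X: "X \<longlonglongrightarrow> t"
  show "(fourier_tr f \<circ> X) \<longlonglongrightarrow> fourier_tr f t"
    unfolding comp_def fourier_tr_def
    by (rule integral_dominated_convergence[where w=f])
      (use f in \<open>auto intro!: tendsto_intros X simp: norm_mult norm_exp_i_times\<close>)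
qed

theorem theorem1:
  fixes f :: "real \<Rightarrow> real"
    and \<Theta> :: "(real \<times> real \<times> real) set"
    and p0 \<alpha>0 \<beta>0 :: real
    and g :: "real \<Rightarrow> real"
  assumes dens: "prob_density f"
    and L2: "square_integrable f"
    and symm: "\<forall>x. f x = f (- x)"
    and compact: "compact \<Theta>"
    and sub: "\<Theta> \<subseteq> {(p, \<alpha>, \<beta>). 0 < p \<and> p < 1/2 \<and> \<alpha> \<noteq> \<beta>}"
    and th0: "(p0, \<alpha>0, \<beta>0) \<in> \<Theta>"
    and g_def: "\<forall>x. g x = p0 * f (x - \<alpha>0) + (1 - p0) * f (x - \<beta>0)"
    and th: "\<theta> \<in> \<Theta>"
  shows "(\<forall>u. Im (fourier_tr g u / mix_M \<theta> u) = 0) \<longleftrightarrow> \<theta> = (p0, \<alpha>0, \<beta>0)"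
proof -
  have fm: "f \<in> borel_measurable lborel" and fi: "integrable lborel f" and fp: "\<forall>x. 0 \<le> f x"
    and f1: "(LINT x|lborel. f x) = 1"
    using dens unfolding prob_density_def by auto
  obtain p a b where thd: "\<theta> = (p,a,b)" by (cases \<theta>) auto
  have pab: "0 < p" "p < 1/2" "a \<noteq> b" using sub th unfolding thd by auto
  have pab0: "0 < p0" "p0 < 1/2" "\<alpha>0 \<noteq> \<beta>0" using sub th0 by auto
  let ?F = "fourier_tr f"
  have Freal: "?F u = complex_of_real (Re (?F u))" for u
  proof -
    have "Im (cnj (?F u)) = Im (?F u)" using F_real[OF symm, of u] by simp
    then have "Im (?F u) = 0" by simp
    then show ?thesis by (simp add: complex_eq_iff)
  qed
  have Fg: "fourier_tr g u = mix_M (p0,\<alpha>0,\<beta>0) u * ?F u" for u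
  proof -
    have gg: "g = (\<lambda>x. p0 * f (x - \<alpha>0) + (1 - p0) * f (x - \<beta>0))" using g_def by auto
    have "fourier_tr g u = (\<integral>x. complex_of_real p0 * (exp (\<i> * complex_of_real (x * u)) * complex_of_real (f (x - \<alpha>0)))
       + complex_of_real (1-p0) * (exp (\<i> * complex_of_real (x * u)) * complex_of_real (f (x - \<beta>0))) \<partial>lborel)"
      unfolding fourier_tr_def gg by (simp add: algebra_simps)
    also have "\<dots> = complex_of_real p0 * fourier_tr (\<lambda>x. f (x - \<alpha>0)) u + complex_of_real (1-p0) * fourier_tr (\<lambda>x. f (x - \<beta>0)) u"
      unfolding fourier_tr_def
      by (subst Bochner_Integration.integral_add[OF integrable_mult_right[OF shift(1)[OF fm fi]] integrable_mult_right[OF shift(1)[OF fm fi]]]) simp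
    also have "\<dots> = mix_M (p0,\<alpha>0,\<beta>0) u * ?F u"
      unfolding shift(2)[OF fm fi] mix_M_def by (simp add: algebra_simps)
    finally show ?thesis .
  qed
  have key: "Im (fourier_tr g u / mix_M \<theta> u) = Re (?F u) * Im (mix_M (p0,\<alpha>0,\<beta>0) u / mix_M \<theta> u)" for u
  proof -
    have q: "fourier_tr g u / mix_M \<theta> u = complex_of_real (Re (?F u)) * (mix_M (p0,\<alpha>0,\<beta>0) u / mix_M \<theta> u)"
      unfolding Fg by (subst Freal) simp
    have Imr: "\<And>r z. Im (complex_of_real r * z) = r * Im z" by simp
    show ?thesis by (simp only: q Imr)
  qed
  show ?thesis
  proof
    assume "\<theta> = (p0, \<alpha>0, \<beta>0)"
    then show "\<forall>u. Im (fourier_tr g u / mix_M \<theta> u) = 0"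
      using key Mnz[OF pab0(1,2)] by simp
  next
    assume A: "\<forall>u. Im (fourier_tr g u / mix_M \<theta> u) = 0"
    have F0: "Re (?F 0) = 1"
      unfolding fourier_tr_def using f1 integral_of_real[OF fi] by simp
    have "isCont (\<lambda>u. Re (?F u)) 0"
      by (rule continuous_Re[OF F_cont[OF fm fi fp]])
    then obtain \<epsilon> where ep: "\<epsilon> > 0" and epp: "\<And>u. \<bar>u - 0\<bar> < \<epsilon> \<Longrightarrow> \<bar>Re (?F u) - Re (?F 0)\<bar> < 1/2"
      unfolding continuous_at_eps_delta dist_real_def by (metis half_gt_zero zero_less_one)
    have Z: "Im (mix_M (p0,\<alpha>0,\<beta>0) u * cnj (mix_M (p,a,b) u)) = 0" if u: "\<bar>u\<bar> < \<epsilon>" for u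
    proof -
      have "Re (?F u) \<noteq> 0" using epp[of u] u F0 by auto
      then have I: "Im (mix_M (p0,\<alpha>0,\<beta>0) u / mix_M (p,a,b) u) = 0" using A key[of u] thd by simp
      have M: "mix_M (p,a,b) u \<noteq> 0" using Mnz pab by blast
      have eq: "mix_M (p0,\<alpha>0,\<beta>0) u * cnj (mix_M (p,a,b) u) = (mix_M (p0,\<alpha>0,\<beta>0) u / mix_M (p,a,b) u) * complex_of_real ((cmod (mix_M (p,a,b) u))\<^sup>2)"
        unfolding complex_norm_square using M by (simp add: field_simps)
      have Imr2: "\<And>r z. Im (z * complex_of_real r) = Im z * r" by simp
      show ?thesis unfolding eq Imr2 I by simp
    qed
    obtain q h l where C: "l < h" "0 < q" "q < 1" "q \<noteq> 1/2" "mix_M (p,a,b) = mix_M (q,h,l)"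
       "if b < a then q = p \<and> h = a \<and> l = b else q = 1-p \<and> h = b \<and> l = a"
      using canon[OF pab] by blast
    obtain q0 h0 l0 where C0: "l0 < h0" "0 < q0" "q0 < 1" "q0 \<noteq> 1/2" "mix_M (p0,\<alpha>0,\<beta>0) = mix_M (q0,h0,l0)"
       "if \<beta>0 < \<alpha>0 then q0 = p0 \<and> h0 = \<alpha>0 \<and> l0 = \<beta>0 else q0 = 1-p0 \<and> h0 = \<beta>0 \<and> l0 = \<alpha>0"
      using canon[OF pab0] by blast
    have "q = q0 \<and> h = h0 \<and> l = l0"
      by (rule core[OF C(1) C0(1) C(2,3) C0(2,3) C(4) ep]) (use Z C(5) C0(5) in simp)
    then show "\<theta> = (p0, \<alpha>0, \<beta>0)"
      using C(6) C0(6) pab pab0 unfolding thd by (auto split: if_splits)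
  qed
qed

end
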